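(* Let $n\ge 4$ be even and let $\ell\ge 3$ be odd with $\gcd(n-1,\ell)\ne 1$. Then $\max(n,\ell)=\binom{n}{2}-\left(\frac{n}{2}+1\right)$, and the graph $\overline{C_3\cup\left(\frac{n-4}{2}\right)P_2\cup K_1}$ is an $(n,\ell)$-extremal graph.
   Context: All graphs are finite and simple; $\overline{G}$ is the complement of $G$, $G\cup H$ is disjoint union, $kH$ is $k$ disjoint copies of $H$, $P_k$ is the path on $k$ vertices, $C_3$ the triangle. Vertex labels lie in $\mathbb{Z}_\ell$. In the neighborhood Lights Out game on $G$, toggling a vertex $v$ adds $1$ (mod $\ell$) to the label of each vertex of the closed neighborhood $N[v]$; the game is won when all labels are $0$. $G$ is $N$-AW if the game can be won from every initial labeling. $\max(n,\ell)$ is the maximum number of edges of an $N$-AW graph on $n$ vertices, and an $(n,\ell)$-extremal graph is an $N$-AW graph on $n$ vertices with $\max(n,\ell)$ edges. *)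

theory Defs
  imports "HOL-Number_Theory.Cong"
begin

definition simple_graph :: "nat \<Rightarrow> (nat \<Rightarrow> nat \<Rightarrow> bool) \<Rightarrow> bool" where
  "simple_graph n E \<longleftrightarrow>
     (\<forall>u v. E u v \<longrightarrow> u < n \<and> v < n \<and> u \<noteq> v) \<and> (\<forall>u v. E u v \<longrightarrow> E v u)"

definition num_edges :: "nat \<Rightarrow> (nat \<Rightarrow> nat \<Rightarrow> bool) \<Rightarrow> nat" where
  "num_edges n E = card {(u, v). u < n \<and> v < n \<and> u < v \<and> E u v}"

definition closed_nbhd :: "nat \<Rightarrow> (nat \<Rightarrow> nat \<Rightarrow> bool) \<Rightarrow> nat \<Rightarrow> nat set" where
  "closed_nbhd n E v = {u. u < n \<and> (u = v \<or> E v u)}"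

text \<open>Neighbourhood Lights Out over Z_l: toggling v (t v times) adds t v to the label of
  every vertex of N[v]. The graph is N-AW if every initial labelling b can be
  brought to all zeros (mod l).\<close>
definition N_AW :: "nat \<Rightarrow> nat \<Rightarrow> (nat \<Rightarrow> nat \<Rightarrow> bool) \<Rightarrow> bool" where
  "N_AW n l E \<longleftrightarrow>
     (\<forall>b :: nat \<Rightarrow> int. \<exists>t :: nat \<Rightarrow> nat. \<forall>u < n.
        [b u + (\<Sum>v \<in> {v. v < n \<and> u \<in> closed_nbhd n E v}. int (t v)) = 0] (mod int l))"

definition max_edges :: "nat \<Rightarrow> nat \<Rightarrow> nat" where
  "max_edges n l = Max {num_edges n E | E. simple_graph n E \<and> N_AW n l E}"

definition extremal :: "nat \<Rightarrow> nat \<Rightarrow> (nat \<Rightarrow> nat \<Rightarrow> bool) \<Rightarrow> bool" where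
  "extremal n l E \<longleftrightarrow> simple_graph n E \<and> N_AW n l E \<and> num_edges n E = max_edges n l"

definition graph_complement :: "nat \<Rightarrow> (nat \<Rightarrow> nat \<Rightarrow> bool) \<Rightarrow> nat \<Rightarrow> nat \<Rightarrow> bool" where
  "graph_complement n E u v \<longleftrightarrow> u < n \<and> v < n \<and> u \<noteq> v \<and> \<not> E u v"

text \<open>A concrete copy of C_3 \<union> ((n-4)/2) P_2 \<union> K_1 on {0..<n} (n even, n \<ge> 4):
  triangle on 0,1,2; vertex 3 isolated; edges {4,5},{6,7},...,{n-2,n-1}.\<close>
definition C3_matching_K1 :: "nat \<Rightarrow> nat \<Rightarrow> nat \<Rightarrow> bool" where
  "C3_matching_K1 n u v \<longleftrightarrow> u < n \<and> v < n \<and> u \<noteq> v \<and>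
     ((u < 3 \<and> v < 3) \<or> (4 \<le> u \<and> 4 \<le> v \<and> u div 2 = v div 2))"

end

theory Submission
  imports Defs
begin


definition Pn :: "nat \<Rightarrow> (nat \<times> nat) set" where
  "Pn n = {(u,v). u<n \<and> v<n \<and> u<v}"

lemma finite_Pn: "finite (Pn n)"
  by (rule finite_subset[of _ "{..<n} \<times> {..<n}"]) (auto simp: Pn_def)

lemma card_Pn: "card (Pn n) = n choose 2"
proof (induction n)
  case 0 show ?case by (simp add: Pn_def)
next
  case (Suc n)
  have e: "Pn (Suc n) = Pn n \<union> (\<lambda>u. (u,n)) ` {..<n}" by (auto simp: Pn_def)
  have d: "Pn n \<inter> (\<lambda>u. (u,n)) ` {..<n} = {}" by (auto simp: Pn_def)
  have "card (Pn (Suc n)) = card (Pn n) + card ((\<lambda>u. (u,n)) ` {..<n})"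
    unfolding e by (rule card_Un_disjoint) (use finite_Pn d in auto)
  also have "card ((\<lambda>u. (u,n)) ` {..<n}) = n" by (subst card_image) (auto simp: inj_on_def)
  finally show ?case using Suc by (simp add: numeral_2_eq_2)
qed

lemma num_edges_alt: "num_edges n E = card (Pn n \<inter> {(u,v). E u v})"
  unfolding num_edges_def Pn_def by (rule arg_cong[where f=card]) auto

lemma num_edges_compl:
  assumes "simple_graph n E"
  shows "num_edges n E + num_edges n (graph_complement n E) = n choose 2"
proof -
  have u: "Pn n = (Pn n \<inter> {(u,v). E u v}) \<union> (Pn n \<inter> {(u,v). graph_complement n E u v})"
    by (auto simp: Pn_def graph_complement_def)
  have "card (Pn n) = card (Pn n \<inter> {(u,v). E u v}) + card (Pn n \<inter> {(u,v). graph_complement n E u v})"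
    by (subst u, rule card_Un_disjoint) (use finite_Pn in \<open>auto simp: graph_complement_def\<close>)
  then show ?thesis by (simp add: num_edges_alt card_Pn)
qed

lemma handshake:
  assumes sym: "\<And>u v. H u v \<Longrightarrow> H v u" and bnd: "\<And>u v. H u v \<Longrightarrow> u < n \<and> v < n \<and> u \<noteq> v"
  shows "(\<Sum>v<n. card {u. u < n \<and> H v u}) = 2 * num_edges n H"
proof -
  let ?L = "{(u,v). u<n \<and> v<n \<and> u<v \<and> H u v}"
  let ?R = "{(u,v). u<n \<and> v<n \<and> v<u \<and> H u v}"
  have fL: "finite ?L" by (rule finite_subset[of _ "{..<n} \<times> {..<n}"]) auto
  have "(\<Sum>v<n. card {u. u < n \<and> H v u}) = card (SIGMA v:{..<n}. {u. u < n \<and> H v u})"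
    by (subst card_SigmaI) auto
  also have "(SIGMA v:{..<n}. {u. u < n \<and> H v u}) = ?L \<union> ?R"
    using bnd by fastforce
  also have "card (?L \<union> ?R) = card ?L + card ?R"
  proof (rule card_Un_disjoint)
    show "finite ?R" by (rule finite_subset[of _ "{..<n} \<times> {..<n}"]) auto
  qed (use fL in auto)
  also have "?R = prod.swap ` ?L" using sym by auto
  also have "card (prod.swap ` ?L) = card ?L" by (rule card_image) (simp add: inj_on_def)
  finally show ?thesis by (simp add: num_edges_def)
qed



lemma twins_not_AW:
  assumes l: "l \<ge> 2" and a: "a < n" and c: "c < n" and ac: "a \<noteq> c"
    and tw: "\<forall>v<n. (v = a \<or> E v a) \<longleftrightarrow> (v = c \<or> E v c)"
  shows "\<not> N_AW n l E"
proof
  assume "N_AW n l E"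
  from this[unfolded N_AW_def, THEN spec, of "\<lambda>u. if u = a then 1 else 0"]
  obtain t :: "nat \<Rightarrow> nat" where t: "\<forall>u<n. [(\<lambda>u. if u = a then 1 else 0) u +
     (\<Sum>v \<in> {v. v < n \<and> u \<in> closed_nbhd n E v}. int (t v)) = 0] (mod int l)"
    by blast
  have eq: "{v. v < n \<and> a \<in> closed_nbhd n E v} = {v. v < n \<and> c \<in> closed_nbhd n E v}"
  proof (rule Collect_cong)
    fix v show "(v < n \<and> a \<in> closed_nbhd n E v) = (v < n \<and> c \<in> closed_nbhd n E v)"
      using tw[rule_format, of v] a c unfolding closed_nbhd_def by blast
  qed
  define S where "S = (\<Sum>v \<in> {v. v < n \<and> a \<in> closed_nbhd n E v}. int (t v))"
  have 1: "int l dvd 1 + S" using t[rule_format, OF a] by (simp add: S_def cong_0_iff)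
  have 2: "int l dvd S" using t[rule_format, OF c] ac by (simp add: S_def eq cong_0_iff)
  have "int l dvd 1" using dvd_diff[OF 1 2] by simp
  then show False using l by simp
qed

lemma ones_not_AW:
  assumes p: "prime p" "p dvd l" and n: "n \<ge> 1"
    and dv: "\<forall>v<n. p dvd card (closed_nbhd n E v)"
  shows "\<not> N_AW n l E"
proof
  assume "N_AW n l E"
  from this[unfolded N_AW_def, THEN spec, of "\<lambda>u. if u = 0 then 1 else 0"]
  obtain t :: "nat \<Rightarrow> nat" where t: "\<forall>u<n. [(\<lambda>u. if u = 0 then 1 else 0) u +
     (\<Sum>v \<in> {v. v < n \<and> u \<in> closed_nbhd n E v}. int (t v)) = 0] (mod int l)"
    by blast
  define S where "S u = (\<Sum>v \<in> {v. v < n \<and> u \<in> closed_nbhd n E v}. int (t v))" for u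
  have "\<forall>u<n. int p dvd (if u = 0 then 1 else 0) + S u"
  proof (intro allI impI)
    fix u assume "u < n"
    then have "int l dvd (if u = 0 then 1 else 0) + S u" using t by (simp add: S_def cong_0_iff)
    then show "int p dvd (if u = 0 then 1 else 0) + S u"
      using p(2) by (meson dvd_trans int_dvd_int_iff)
  qed
  then have "int p dvd (\<Sum>u<n. (if u = 0 then 1 else 0) + S u)" by (intro dvd_sum) auto
  also have "(\<Sum>u<n. (if u = 0 then 1 else 0) + S u) = 1 + (\<Sum>u<n. S u)"
    using n by (simp add: sum.distrib)
  also have "(\<Sum>u<n. S u) = (\<Sum>u<n. \<Sum>v<n. if u \<in> closed_nbhd n E v then int (t v) else 0)"
  proof (rule sum.cong[OF refl])
    fix u assume "u \<in> {..<n}"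
    have se: "{v. v < n \<and> u \<in> closed_nbhd n E v} = {v \<in> {..<n}. u \<in> closed_nbhd n E v}" by auto
    show "S u = (\<Sum>v<n. if u \<in> closed_nbhd n E v then int (t v) else 0)"
      unfolding S_def se by (rule sum.inter_filter) simp
  qed
  also have "\<dots> = (\<Sum>v<n. \<Sum>u<n. if u \<in> closed_nbhd n E v then int (t v) else 0)"
    by (rule sum.swap)
  also have "\<dots> = (\<Sum>v<n. int (t v) * int (card (closed_nbhd n E v)))"
  proof (rule sum.cong[OF refl])
    fix v assume "v \<in> {..<n}"
    have se: "closed_nbhd n E v = {u \<in> {..<n}. u \<in> closed_nbhd n E v}" by (auto simp: closed_nbhd_def)
    have "(\<Sum>u<n. if u \<in> closed_nbhd n E v then int (t v) else 0) = (\<Sum>u\<in>closed_nbhd n E v. int (t v))"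
      by (subst (2) se, rule sum.inter_filter[symmetric]) simp
    then show "(\<Sum>u<n. if u \<in> closed_nbhd n E v then int (t v) else 0) = int (t v) * int (card (closed_nbhd n E v))"
      by simp
  qed
  finally have A: "int p dvd 1 + (\<Sum>v<n. int (t v) * int (card (closed_nbhd n E v)))" .
  have B: "int p dvd (\<Sum>v<n. int (t v) * int (card (closed_nbhd n E v)))"
    using dv by (intro dvd_sum) (simp add: int_dvd_int_iff)
  have "int p dvd 1" using dvd_diff[OF A B] by simp
  then show False using p(1) by (simp add: prime_gt_1_nat)
qed



lemma upper:
  assumes sg: "simple_graph n E" and aw: "N_AW n l E" and n4: "n \<ge> 4" and ev: "even n"
    and l2: "l \<ge> 2" and p: "prime p" "p dvd l" "p dvd n - 1"
  shows "num_edges n E \<le> (n choose 2) - (n div 2 + 1)"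
proof (rule ccontr)
  assume nt: "\<not> ?thesis"
  define H where "H = graph_complement n E"
  define m where "m = num_edges n H"
  have mE: "num_edges n E + m = n choose 2" unfolding m_def H_def by (rule num_edges_compl[OF sg])
  have "m < n div 2 + 1" using mE nt by linarith
  then have m2: "2 * m \<le> n" using ev by auto
  have Hsym: "\<And>u v. H u v \<Longrightarrow> H v u" using sg unfolding H_def graph_complement_def simple_graph_def by blast
  have Hb: "\<And>u v. H u v \<Longrightarrow> u < n \<and> v < n \<and> u \<noteq> v" unfolding H_def graph_complement_def by blast
  define Nb where "Nb v = {u. u < n \<and> H v u}" for v
  define d where "d v = card (Nb v)" for v
  have finNb: "finite (Nb v)" for v unfolding Nb_def by auto
  have sumd: "(\<Sum>v<n. d v) = 2 * m" unfolding d_def Nb_def m_def by (rule handshake[OF Hsym Hb])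
  have notw: False if "a < n" "c < n" "a \<noteq> c" "Nb a = Nb c" for a c
  proof -
    have "\<forall>v<n. (v = a \<or> E v a) \<longleftrightarrow> (v = c \<or> E v c)"
    proof (intro allI impI)
      fix v assume v: "v < n"
      have "v \<in> Nb a \<longleftrightarrow> v \<in> Nb c" using that by simp
      then have "H a v \<longleftrightarrow> H c v" using v by (simp add: Nb_def)
      then have "H v a \<longleftrightarrow> H v c" using Hsym by blast
      moreover have "E v a \<Longrightarrow> v \<noteq> a" "E v c \<Longrightarrow> v \<noteq> c" using sg unfolding simple_graph_def by blast+
      ultimately show "(v = a \<or> E v a) \<longleftrightarrow> (v = c \<or> E v c)"
        using v that(1,2) unfolding H_def graph_complement_def by blast
    qed
    then show False using twins_not_AW[OF l2 that(1,2,3)] aw by blast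
  qed
  have alld: "\<forall>v<n. d v = 1"
  proof (cases "\<exists>w<n. d w = 0")
    case True
    then obtain w where w: "w < n" "d w = 0" by blast
    have Nw: "Nb w = {}" using w finNb d_def by auto
    have pos: "d v \<ge> 1" if "v < n" "v \<noteq> w" for v
    proof (rule ccontr)
      assume "\<not> d v \<ge> 1"
      then have "card (Nb v) = 0" using d_def by simp
      then have "Nb v = {}" using finNb[of v] by simp
      then show False using notw[OF that(1) w(1) that(2)] Nw by simp
    qed
    show ?thesis
    proof (cases "\<exists>b<n. b \<noteq> w \<and> d b \<noteq> 1")
      case False
      then have "\<And>v. v\<in>{..<n} \<Longrightarrow> d v = (if v = w then 0 else 1)" using w by auto
      then have "(\<Sum>v<n. d v) = (\<Sum>v<n. (if v = w then 0 else 1))" by (rule sum.cong[OF refl])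
      also have "\<dots> = card ({..<n} - {w})" by (simp add: sum.If_cases Diff_eq)
      also have "\<dots> = n - 1" using w by simp
      finally have "2 * m = n - 1" using sumd by simp
      then show ?thesis using ev n4 by presburger
    next
      case True
      then obtain b where b: "b < n" "b \<noteq> w" "d b \<noteq> 1" by blast
      have db: "d b \<ge> 2" using pos[OF b(1,2)] b(3) by simp
      define g where "g v = (if v = w then 0 else 1) + (if v = b then 1 else (0::nat))" for v
      have sg': "(\<Sum>v<n. g v) = n"
      proof -
        have "(\<Sum>v<n. g v) = (\<Sum>v<n. (if v = w then 0 else 1)) + (\<Sum>v<n. (if v = b then 1 else (0::nat)))"
          unfolding g_def by (rule sum.distrib)
        also have "(\<Sum>v<n. (if v = w then 0 else 1)) = card ({..<n} - {w})" by (simp add: sum.If_cases Diff_eq)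
        also have "\<dots> = n - 1" using w by simp
        also have "(\<Sum>v<n. (if v = b then 1 else (0::nat))) = 1" using b by simp
        finally show ?thesis using n4 by simp
      qed
      have ge: "g v \<le> d v" if "v < n" for v
        using pos[OF that] db w by (auto simp: g_def)
      have eq: "d v = g v" if "v < n" for v
      proof (rule ccontr)
        assume "d v \<noteq> g v"
        then have "g v < d v" using ge[OF that] by simp
        then have "(\<Sum>v<n. g v) < (\<Sum>v<n. d v)"
          using that ge by (intro sum_strict_mono_ex1) auto
        then show False using sg' sumd m2 by simp
      qed
      have "d b = 2" using eq[OF b(1)] b(2) by (simp add: g_def)
      then obtain x y where xy: "Nb b = {x, y}" "x \<noteq> y" unfolding d_def by (auto simp: card_2_iff)
      have one: "Nb z = {b}" if "z \<in> Nb b" for z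
      proof -
        have z: "z < n" "H b z" using that by (auto simp: Nb_def)
        have bz: "b \<in> Nb z" using z Hsym Hb by (auto simp: Nb_def)
        have "z \<noteq> w" using bz Nw by auto
        moreover have "z \<noteq> b" using Hb z(2) by blast
        ultimately have "d z = 1" using eq[OF z(1)] by (simp add: g_def)
        then obtain q where "Nb z = {q}" unfolding d_def by (auto simp: card_1_singleton_iff)
        then show ?thesis using bz by auto
      qed
      have "Nb x = Nb y" using one xy by auto
      moreover have "x < n" "y < n" using xy by (auto simp: Nb_def)
      ultimately show ?thesis using notw xy(2) by blast
    qed
  next
    case False
    then have pos: "d v \<ge> 1" if "v < n" for v using that by (simp add: Suc_le_eq)
    show ?thesis
    proof (rule ccontr)
      assume "\<not> ?thesis"
      then obtain a where a: "a < n" "d a \<noteq> 1" by blast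
      have a1: "1 < d a" using pos[OF a(1)] a(2) by simp
      have "(\<Sum>v<n. (1::nat)) < (\<Sum>v<n. d v)"
        using a(1) a1 pos by (intro sum_strict_mono_ex1) auto
      then show False using sumd m2 by simp
    qed
  qed
  have "p dvd card (closed_nbhd n E v)" if v: "v < n" for v
  proof -
    have "closed_nbhd n E v = {..<n} - Nb v"
      using v sg unfolding closed_nbhd_def Nb_def H_def graph_complement_def simple_graph_def by auto
    then have "card (closed_nbhd n E v) = n - 1"
    proof -
      have "card ({..<n} - Nb v) = card {..<n} - card (Nb v)"
        by (rule card_Diff_subset) (auto simp: Nb_def)
      then show ?thesis using alld v d_def \<open>closed_nbhd n E v = {..<n} - Nb v\<close> by simp
    qed
    then show ?thesis using p(3) by simp
  qed
  then show False using ones_not_AW[OF p(1,2)] n4 aw by auto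
qed



lemma simple_C3M: "simple_graph n (C3_matching_K1 n)"
  unfolding simple_graph_def C3_matching_K1_def by auto

lemma simple_G0: "simple_graph n (graph_complement n (C3_matching_K1 n))"
  unfolding simple_graph_def graph_complement_def C3_matching_K1_def by auto

lemma edges_C3M:
  assumes n4: "n \<ge> 4" and ev: "even n"
  shows "num_edges n (C3_matching_K1 n) = n div 2 + 1"
proof -
  have e: "{(u,v). u<n \<and> v<n \<and> u<v \<and> C3_matching_K1 n u v} =
     {(0,1),(0,2),(1,2)} \<union> (\<lambda>k. (2*k, 2*k+1)) ` {2..<n div 2}" (is "?A = ?B \<union> ?C")
  proof (intro equalityI subsetI)
    fix x assume "x \<in> ?A"
    then obtain u v where x: "x = (u,v)" "u<n" "v<n" "u<v" "C3_matching_K1 n u v" by auto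
    show "x \<in> ?B \<union> ?C"
    proof (cases "u < 3 \<and> v < 3")
      case True
      then have "(u,v) \<in> ?B" using x(4) by (auto simp: less_Suc_eq numeral_3_eq_3)
      then show ?thesis using x(1) by blast
    next
      case False
      then have h: "4 \<le> u" "u div 2 = v div 2" using x(5) by (auto simp: C3_matching_K1_def)
      define k where "k = u div 2"
      have uk: "u = 2*k + u mod 2" "v = 2*k + v mod 2" "u mod 2 < 2" "v mod 2 < 2" "n = 2 * (n div 2)"
        using h(2) ev unfolding k_def by (metis div_mult_mod_eq mult.commute, metis div_mult_mod_eq mult.commute, simp_all)
      then have "u = 2 * k" "v = 2 * k + 1" using x(4) by linarith+
      then have "u = 2 * (u div 2)" "v = 2 * (u div 2) + 1" "2 \<le> u div 2" "u div 2 < n div 2"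
        using h(1) x(3) uk(5) unfolding k_def[symmetric] by linarith+
      then have "(u,v) \<in> ?C" by (intro image_eqI[of _ _ "u div 2"]) auto
      then show ?thesis using x by simp
    qed
  next
    fix x assume "x \<in> ?B \<union> ?C"
    then show "x \<in> ?A"
    proof
      assume "x \<in> ?B" then show ?thesis using n4 by (auto simp: C3_matching_K1_def)
    next
      assume "x \<in> ?C"
      then obtain k where "x = (2*k, 2*k+1)" "2 \<le> k" "k < n div 2" by auto
      moreover have "n = 2 * (n div 2)" using ev by simp
      moreover have "2*k+1 < n" using \<open>k < n div 2\<close> calculation(4) by linarith
      ultimately show ?thesis by (auto simp: C3_matching_K1_def)
    qed
  qed
  have "card (?B \<union> ?C) = card ?B + card ?C"
    by (rule card_Un_disjoint) auto
  also have "card ?B = 3" by simp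
  also have "card ?C = n div 2 - 2" by (subst card_image) (auto simp: inj_on_def)
  finally show ?thesis unfolding num_edges_def e using n4 ev by simp
qed

lemma edges_G0:
  assumes n4: "n \<ge> 4" and ev: "even n"
  shows "num_edges n (graph_complement n (C3_matching_K1 n)) = (n choose 2) - (n div 2 + 1)"
  using num_edges_compl[OF simple_C3M, of n] edges_C3M[OF n4 ev] by simp



definition pt :: "nat \<Rightarrow> nat" where "pt v = (if even v then v + 1 else v - 1)"

lemma Cn_big:
  assumes ev: "even n" and u: "4 \<le> u" "u < n"
  shows "{v. v < n \<and> C3_matching_K1 n u v} = {pt u}" and "4 \<le> pt u" "pt u < n" "pt (pt u) = u"
proof -
  obtain q where q: "n = 2 * q" using ev by blast
  obtain k where k: "u = 2 * k \<or> u = 2 * k + 1" by (metis oddE evenE)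
  have "u div 2 = k" using k by auto
  have ptu: "pt u = (if u = 2 * k then 2 * k + 1 else 2 * k)" using k by (auto simp: pt_def)
  show "4 \<le> pt u" "pt u < n" "pt (pt u) = u" using k q u ptu by (auto simp: pt_def)
  have A: "C3_matching_K1 n u v \<longleftrightarrow> v < n \<and> v \<noteq> u \<and> 4 \<le> v \<and> v div 2 = k" for v
    using u \<open>u div 2 = k\<close> unfolding C3_matching_K1_def by auto
  have B: "v div 2 = k \<longleftrightarrow> v = 2 * k \<or> v = 2 * k + 1" for v by auto
  have k2: "2 \<le> k" using u k by auto
  show "{v. v < n \<and> C3_matching_K1 n u v} = {pt u}"
  proof (intro equalityI subsetI)
    fix v assume "v \<in> {v. v < n \<and> C3_matching_K1 n u v}"
    then have "v \<noteq> u" "v = 2 * k \<or> v = 2 * k + 1" using A B by auto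
    then show "v \<in> {pt u}" using ptu k by auto
  next
    fix v assume "v \<in> {pt u}"
    then have v: "v = pt u" by simp
    have "v div 2 = k" using v ptu B by auto
    moreover have "4 \<le> v" "v < n" "v \<noteq> u" using v ptu k k2 \<open>pt u < n\<close> by auto
    ultimately show "v \<in> {v. v < n \<and> C3_matching_K1 n u v}" using A by auto
  qed
qed



lemma AW_G0:
  assumes n4: "n \<ge> 4" and ev: "even n" and l3: "l \<ge> 3" and od: "odd l"
  shows "N_AW n l (graph_complement n (C3_matching_K1 n))"
  unfolding N_AW_def
proof
  fix b :: "nat \<Rightarrow> int"
  define G where "G = graph_complement n (C3_matching_K1 n)"
  define c where "c u = - b u" for u
  define xs where "xs v = (if v < 3 then c 3 + 2 * c v - (c 0 + c 1 + c 2)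
      else if v = 3 then 0 else 2 * (c 3 - c (pt v)))" for v
  define X3 where "X3 = 2 * c 3 - (\<Sum>v<n. xs v)"
  define x where "x v = xs v + (if v = 3 then X3 else 0)" for v
  define Cn where "Cn u = {v. v < n \<and> C3_matching_K1 n u v}" for u
  have sumx: "(\<Sum>v<n. x v) = 2 * c 3"
    using n4 unfolding x_def X3_def by (simp add: sum.distrib xs_def)
  have I: "{v. v < n \<and> u \<in> closed_nbhd n G v} = {..<n} - Cn u" if "u < n" for u
    using that unfolding Cn_def closed_nbhd_def G_def graph_complement_def C3_matching_K1_def by auto
  have CnS: "(\<Sum>v\<in>Cn u. x v) = 2 * c 3 - 2 * c u" if u: "u < n" for u
  proof -
    have x3: "x 3 = X3" "x 0 = xs 0" "x 1 = xs 1" "x 2 = xs 2" by (simp_all add: x_def xs_def)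
    consider "u = 0" | "u = 1" | "u = 2" | "u = 3" | "4 \<le> u" by linarith
    then show ?thesis
    proof cases
      case 1
      then have "Cn u = {1, 2}" using n4 unfolding Cn_def C3_matching_K1_def by auto
      then show ?thesis using 1 x3 by (simp add: xs_def)
    next
      case 2
      then have "Cn u = {0, 2}" using n4 unfolding Cn_def C3_matching_K1_def by auto
      then show ?thesis using 2 x3 by (simp add: xs_def)
    next
      case 3
      then have "Cn u = {0, 1}" using n4 unfolding Cn_def C3_matching_K1_def by auto
      then show ?thesis using 3 x3 by (simp add: xs_def)
    next
      case 4
      then have "Cn u = {}" unfolding Cn_def C3_matching_K1_def by auto
      then show ?thesis using 4 by simp
    next
      case 5
      note cb = Cn_big[OF ev 5 u]
      have "Cn u = {pt u}" using cb(1) unfolding Cn_def .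
      moreover have "x (pt u) = 2 * (c 3 - c u)" using cb(2,4) by (simp add: x_def xs_def)
      ultimately show ?thesis by simp
    qed
  qed
  have sumI: "(\<Sum>v\<in>{v. v < n \<and> u \<in> closed_nbhd n G v}. x v) = 2 * c u" if u: "u < n" for u
  proof -
    have "Cn u \<subseteq> {..<n}" unfolding Cn_def by auto
    then have "(\<Sum>v<n. x v) = (\<Sum>v\<in>{..<n} - Cn u. x v) + (\<Sum>v\<in>Cn u. x v)"
      by (rule sum.subset_diff) simp
    then show ?thesis using I[OF u] CnS[OF u] sumx by simp
  qed
  define h where "h = int ((l + 1) div 2)"
  have "2 * ((l + 1) div 2) = l + 1" using od by presburger
  then have h2: "2 * h = int l + 1" unfolding h_def by linarith
  define t where "t v = nat ((h * x v) mod int l)" for v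
  have lpos: "int l > 0" using l3 by simp
  show "\<exists>t. \<forall>u<n. [b u + (\<Sum>v\<in>{v. v < n \<and> u \<in> closed_nbhd n G v}. int (t v)) = 0] (mod int l)"
  proof (intro exI allI impI)
    fix u assume u: "u < n"
    let ?I = "{v. v < n \<and> u \<in> closed_nbhd n G v}"
    have ti: "int (t v) = (h * x v) mod int l" for v
      unfolding t_def using lpos by simp
    have "(\<Sum>v\<in>?I. int (t v)) = (\<Sum>v\<in>?I. h * x v) + (\<Sum>v\<in>?I. int (t v) - h * x v)"
      by (simp add: sum.distrib[symmetric])
    also have "(\<Sum>v\<in>?I. h * x v) = h * (2 * c u)" unfolding sum_distrib_left[symmetric] sumI[OF u] ..
    finally have sm: "(\<Sum>v\<in>?I. int (t v)) = h * (2 * c u) + (\<Sum>v\<in>?I. int (t v) - h * x v)" .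
    have e: "b u + (\<Sum>v\<in>?I. int (t v)) = - (int l * b u) + (\<Sum>v\<in>?I. int (t v) - h * x v)"
    proof -
      have "h * (2 * c u) = (2 * h) * c u" by simp
      also have "\<dots> = - (int l * b u) - b u" unfolding h2 c_def by (simp add: algebra_simps)
      finally have "h * (2 * c u) = - (int l * b u) - b u" .
      then show ?thesis using sm by linarith
    qed
    have d1: "int l dvd (\<Sum>v\<in>?I. int (t v) - h * x v)"
    proof (rule dvd_sum)
      fix v
      have "int (t v) - h * x v = - (int l * ((h * x v) div int l))"
        unfolding ti by (simp add: minus_div_mult_eq_mod[symmetric])
      then show "int l dvd int (t v) - h * x v" by simp
    qed
    have "int l dvd b u + (\<Sum>v\<in>?I. int (t v))" unfolding e using d1 by simp
    then show "[b u + (\<Sum>v\<in>?I. int (t v)) = 0] (mod int l)" by (simp add: cong_0_iff)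
  qed
qed


theorem proposition4p4:
  fixes n l :: nat
  assumes "n \<ge> 4" and "even n" and "l \<ge> 3" and "odd l" and "gcd (n - 1) l \<noteq> 1"
  shows "max_edges n l = (n choose 2) - (n div 2 + 1)
         \<and> extremal n l (graph_complement n (C3_matching_K1 n))"
proof -
  obtain p where p: "prime p" "p dvd gcd (n - 1) l" using prime_factor_nat[OF assms(5)] by blast
  then have pl: "p dvd l" "p dvd n - 1" by simp_all
  define T where "T = (n choose 2) - (n div 2 + 1)"
  define S where "S = {num_edges n E | E. simple_graph n E \<and> N_AW n l E}"
  have aw0: "N_AW n l (graph_complement n (C3_matching_K1 n))"
    by (rule AW_G0[OF assms(1-4)])
  have TS: "T \<in> S" unfolding S_def T_def
    using simple_G0[of n] aw0 edges_G0[OF assms(1,2)] by (metis (mono_tags, lifting) mem_Collect_eq)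
  have le: "x \<le> T" if "x \<in> S" for x
  proof -
    from that obtain E where "x = num_edges n E" "simple_graph n E" "N_AW n l E" unfolding S_def by blast
    then show ?thesis unfolding T_def using upper[OF _ _ assms(1,2) _ p(1) pl] assms(3) by simp
  qed
  have fin: "finite S" by (rule finite_subset[of _ "{..T}"]) (use le in auto)
  have mx: "max_edges n l = T" unfolding max_edges_def S_def[symmetric]
    by (rule Max_eqI[OF fin le TS])
  show ?thesis using mx unfolding extremal_def T_def
    using simple_G0[of n] aw0 edges_G0[OF assms(1,2)] by simp
qed

end
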